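(* In the setting below, with $Q=L/\mu$, suppose $0<\eta\le\frac1L$. Then for every $k\ge 0$, \[ \|x_k-x^*\|\le \frac{2}{\mu}\|d_k\|+2\eta Q\sum_{j=(k-K)_+}^{k-1}\|d_j\|. \]
   Context: Let $m,n\ge 1$ be integers and $\|\cdot\|$ the Euclidean norm on $\mathbb{R}^n$. For $i=1,\dots,m$, let $f_i:\mathbb{R}^n\to\mathbb{R}$ be continuously differentiable with $\|\nabla f_i(x)-\nabla f_i(y)\|\le L_i\|x-y\|$ for all $x,y$, where $L_i\ge 0$ (the $f_i$ are not assumed convex). Let $f=\frac1m\sum_{i=1}^m f_i$ and $L=\frac1m\sum_{i=1}^m L_i$. Assume $f$ is $\mu$-strongly convex for some $\mu>0$ (i.e. $x\mapsto f(x)-\frac{\mu}{2}\|x\|^2$ is convex). Let $r:\mathbb{R}^n\to(-\infty,\infty]$ be proper, closed and convex, let $F=f+r$, and let $x^*$ be the unique minimizer of $F$. For $\eta>0$ define $\mathrm{prox}_r^\eta(y)=\arg\min_{x\in\mathbb{R}^n}\{\frac12\|x-y\|^2+\eta r(x)\}$. PIAG method: fix an integer $K\ge 0$, a step size $\eta>0$ and $x_0\in\mathbb{R}^n$; for each $k\ge0$ and each $i$ let $\tau_{i,k}$ be any (deterministically chosen) integer with $\max(k-K,0)\le\tau_{i,k}\le k$; set $g_k=\frac1m\sum_{i=1}^m\nabla f_i(x_{\tau_{i,k}})$ and $x_{k+1}=\mathrm{prox}_r^\eta(x_k-\eta g_k)$. Define $d_k=(x_{k+1}-x_k)/\eta$.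 Write $(t)_+=\max(t,0)$; empty sums are zero. *)

theory Defs
  imports "HOL-Analysis.Analysis" "HOL-Library.Extended_Real"
begin

definition proper_closed_convex :: "('a::euclidean_space \<Rightarrow> ereal) \<Rightarrow> bool" where
  "proper_closed_convex r \<longleftrightarrow>
     (\<forall>x. r x \<noteq> -\<infinity>) \<and> (\<exists>x. r x \<noteq> \<infinity>) \<and>
     convex {(x, t::real). r x \<le> ereal t} \<and> closed {(x, t::real). r x \<le> ereal t}"

definition is_prox :: "('a::euclidean_space \<Rightarrow> ereal) \<Rightarrow> real \<Rightarrow> 'a \<Rightarrow> 'a \<Rightarrow> bool" where
  "is_prox r \<eta> y z \<longleftrightarrow>
     (\<forall>x. ereal (1/2 * (norm (z - y))\<^sup>2) + ereal \<eta> * r z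
          \<le> ereal (1/2 * (norm (x - y))\<^sup>2) + ereal \<eta> * r x)"

end

theory Submission imports Defs begin

lemma L0:
  fixes \<phi> :: "real \<Rightarrow> real"
  assumes d: "(\<phi> has_real_derivative D) (at 0)"
    and le: "\<And>t. 0 < t \<Longrightarrow> t \<le> 1 \<Longrightarrow> \<phi> 0 \<le> \<phi> t"
  shows "0 \<le> D"
proof (rule ccontr)
  assume "\<not> 0 \<le> D"
  then have "D < 0" by simp
  from DERIV_neg_dec_right[OF d this] obtain e where e: "e > 0" "\<forall>h>0. h < e \<longrightarrow> \<phi> 0 > \<phi> (0 + h)" by blast
  define t where "t = min (e/2) 1"
  have "t > 0" "t < e" "t \<le> 1" using e(1) by (auto simp: t_def)
  then show False using e(2) le[of t] by force
qed

lemma path_deriv: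
  fixes F :: "'a::real_inner \<Rightarrow> real"
  assumes "(F has_derivative (\<lambda>h. g \<bullet> h)) (at a)"
  shows "((\<lambda>t. F (a + t *\<^sub>R v)) has_real_derivative (g \<bullet> v)) (at 0)"
proof -
  have p: "((\<lambda>t::real. a + t *\<^sub>R v) has_derivative (\<lambda>t. t *\<^sub>R v)) (at 0)"
    by (auto intro!: derivative_eq_intros)
  have "(F has_derivative (\<lambda>h. g \<bullet> h)) (at ((\<lambda>t::real. a + t *\<^sub>R v) 0))" using assms by simp
  from has_derivative_compose[OF p this]
  have "((\<lambda>t. F (a + t *\<^sub>R v)) has_derivative (\<lambda>t. g \<bullet> (t *\<^sub>R v))) (at 0)" .
  moreover have "(\<lambda>t. g \<bullet> (t *\<^sub>R v)) = (*) (g \<bullet> v)" by (auto simp: fun_eq_iff)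
  ultimately show ?thesis by (simp add: has_field_derivative_def)
qed

lemma tangent:
  fixes h :: "'a::real_inner \<Rightarrow> real"
  assumes c: "convex_on UNIV h" and d: "(h has_derivative (\<lambda>u. g \<bullet> u)) (at a)"
  shows "h a + g \<bullet> (b - a) \<le> h b"
proof -
  define \<phi> where "\<phi> t = h a + t * (h b - h a) - h (a + t *\<^sub>R (b - a))" for t
  have "(\<phi> has_real_derivative ((h b - h a) - g \<bullet> (b - a))) (at 0)"
    unfolding \<phi>_def using path_deriv[OF d, of "b - a"]
    by (auto intro!: derivative_eq_intros)
  moreover have "\<phi> 0 \<le> \<phi> t" if "0 < t" "t \<le> 1" for t
  proof -
    have "h ((1 - t) *\<^sub>R a + t *\<^sub>R b) \<le> (1 - t) * h a + t * h b"
      using c that by (intro convex_onD) auto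
    moreover have "(1 - t) *\<^sub>R a + t *\<^sub>R b = a + t *\<^sub>R (b - a)" by (simp add: algebra_simps)
    ultimately show ?thesis unfolding \<phi>_def by (simp add: algebra_simps)
  qed
  ultimately have "0 \<le> (h b - h a) - g \<bullet> (b - a)" by (rule L0)
  then show ?thesis by simp
qed

lemma tele: "norm (x k - x (j::nat)) \<le> (\<Sum>i\<in>{j..<k}. norm (x (Suc i) - x i))" if "j \<le> k"
  for x :: "nat \<Rightarrow> 'a::real_normed_vector"
  using that
proof (induction k)
  case 0 then show ?case by simp
next
  case (Suc k)
  show ?case
  proof (cases "j = Suc k")
    case True then show ?thesis by simp
  next
    case False
    then have jk: "j \<le> k" using Suc by simp
    have "norm (x (Suc k) - x j) \<le> norm (x (Suc k) - x k) + norm (x k - x j)"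
      using norm_triangle_ineq[of "x (Suc k) - x k" "x k - x j"] by simp
    also have "\<dots> \<le> norm (x (Suc k) - x k) + (\<Sum>i\<in>{j..<k}. norm (x (Suc i) - x i))"
      using Suc.IH[OF jk] by simp
    finally show ?thesis using jk by simp
  qed
qed


lemma final_arith:
  fixes \<mu> \<eta> E n D :: real
  assumes mu: "\<mu> > 0" and eta: "\<eta> > 0" and me: "\<mu> * \<eta> \<le> 1" and E0: "E \<ge> 0" and n0: "n \<ge> 0" and D0: "D \<ge> 0"
    and main: "\<mu> * E^2 \<le> (D + 2*n) * E + \<eta> * D * n - \<eta> * n^2"
  shows "E \<le> (2*n + 2*D) / \<mu>"
proof (rule ccontr)
  assume "\<not> ?thesis"
  then have c: "\<mu> * E > 2*n + 2*D" using mu by (simp add: field_simps)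
  have Ep: "E > 0"
  proof (rule ccontr)
    assume "\<not> E > 0" then have "E = 0" using E0 by simp
    then show False using c n0 D0 by simp
  qed
  have "(2*n + 2*D) * E < (\<mu> * E) * E" using c Ep by (rule mult_strict_right_mono)
  also have "\<dots> = \<mu> * E^2" by (simp add: power2_eq_square)
  finally have "(2*n + 2*D) * E < (D + 2*n) * E + \<eta> * D * n - \<eta> * n^2" using main by linarith
  then have a: "D * E < \<eta> * (n * (D - n))" by (simp add: algebra_simps power2_eq_square)
  have b: "n * (D - n) \<le> D^2/4"
  proof -
    have "0 \<le> (D - 2*n)^2" by simp
    then show ?thesis by (simp add: algebra_simps power2_eq_square)
  qed
  have s1: "\<mu> * (D * E) < \<mu> * (\<eta> * (n * (D - n)))" using a mu by (rule mult_strict_left_mono)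
  have s2: "\<eta> * (n * (D - n)) \<le> \<eta> * (D^2/4)" using b eta by (intro mult_left_mono) auto
  have s2': "\<mu> * (\<eta> * (n * (D - n))) \<le> \<mu> * (\<eta> * (D^2/4))" by (rule mult_left_mono[OF s2]) (use mu in simp)
  have s3: "(\<mu> * \<eta>) * (D^2/4) \<le> 1 * (D^2/4)" using me by (intro mult_right_mono) auto
  have s4: "D * (2 * D) \<le> D * (\<mu> * E)" using c D0 n0 by (intro mult_left_mono) auto
  have e1: "\<mu> * (D * E) = D * (\<mu> * E)" by simp
  have e2: "\<mu> * (\<eta> * (D^2/4)) = (\<mu> * \<eta>) * (D^2/4)" by simp
  have e3: "D * (2 * D) = 2 * D^2" by (simp add: power2_eq_square)
  have "0 \<le> D^2" by simp
  then show False using s1 s2' s3 s4 e1 e2 e3 by linarith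
qed


lemma r_conv:
  fixes r :: "'a::euclidean_space \<Rightarrow> ereal"
  assumes pcc: "proper_closed_convex r" and ra: "r a = ereal ra" and rb: "r b = ereal rb"
    and t: "0 \<le> t" "t \<le> 1"
  shows "r (a + t *\<^sub>R (b - a)) \<le> ereal ((1 - t) * ra + t * rb)"
proof -
  let ?S = "{(x, s::real). r x \<le> ereal s}"
  have cS: "convex ?S" using pcc unfolding proper_closed_convex_def by blast
  have "(a, ra) \<in> ?S" "(b, rb) \<in> ?S" using ra rb by auto
  from convexD[OF cS this, of "1 - t" t] t
  have "((1 - t) *\<^sub>R a + t *\<^sub>R b, (1 - t) * ra + t * rb) \<in> ?S" by simp
  moreover have "(1 - t) *\<^sub>R a + t *\<^sub>R b = a + t *\<^sub>R (b - a)" by (simp add: algebra_simps)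
  ultimately show ?thesis by simp
qed

lemma sqd: "((\<lambda>u. (norm (u - y))^2) has_derivative (\<lambda>h. (2 *\<^sub>R (u - y)) \<bullet> h)) (at u)"
  for y :: "'a::real_inner"
  unfolding power2_norm_eq_inner
  by (auto intro!: derivative_eq_intros simp: fun_eq_iff inner_commute algebra_simps)

lemma real_of_r:
  fixes r :: "'a::euclidean_space \<Rightarrow> ereal"
  assumes pcc: "proper_closed_convex r" and "r q \<le> ereal c"
  obtains rq where "r q = ereal rq" "rq \<le> c"
proof -
  have "r q \<noteq> -\<infinity>" using pcc unfolding proper_closed_convex_def by blast
  with assms(2) show ?thesis using that by (cases "r q") auto
qed

lemma prox_vi:
  fixes r :: "'a::euclidean_space \<Rightarrow> ereal"
  assumes pcc: "proper_closed_convex r" and p: "is_prox r \<eta> y z" and eta: "\<eta> > 0"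
    and rz: "r z = ereal rz" and rw: "r w = ereal rw"
  shows "(y - z) \<bullet> (w - z) \<le> \<eta> * (rw - rz)"
proof -
  define \<phi> where "\<phi> t = 1/2 * (norm (z + t *\<^sub>R (w - z) - y))^2 + \<eta> * (t * (rw - rz))" for t
  have d1: "((\<lambda>u. 1/2 * (norm (u - y))^2) has_derivative (\<lambda>h. (z - y) \<bullet> h)) (at z)"
    using has_derivative_mult_right[OF sqd[of y z], of "1/2"] by (simp add: inner_scaleR_left)
  have A: "((\<lambda>t. 1/2 * (norm (z + t *\<^sub>R (w - z) - y))^2) has_real_derivative ((z - y) \<bullet> (w - z))) (at 0)"
    by (rule path_deriv[OF d1])
  have B: "((\<lambda>t. \<eta> * (t * (rw - rz))) has_real_derivative (\<eta> * (rw - rz))) (at 0)"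
    by (auto intro!: derivative_eq_intros)
  have "(\<phi> has_real_derivative ((z - y) \<bullet> (w - z) + \<eta> * (rw - rz))) (at 0)"
    unfolding \<phi>_def[abs_def] by (rule DERIV_add[OF A B])
  moreover have "\<phi> 0 \<le> \<phi> t" if t: "0 < t" "t \<le> 1" for t
  proof -
    define q where "q = z + t *\<^sub>R (w - z)"
    have "r q \<le> ereal ((1 - t) * rz + t * rw)" unfolding q_def using r_conv[OF pcc rz rw] t by simp
    then obtain rq where rq: "r q = ereal rq" "rq \<le> (1 - t) * rz + t * rw" using real_of_r[OF pcc] by blast
    have "ereal (1/2 * (norm (z - y))\<^sup>2) + ereal \<eta> * r z \<le> ereal (1/2 * (norm (q - y))\<^sup>2) + ereal \<eta> * r q"
      using p unfolding is_prox_def by blast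
    then have "1/2 * (norm (z - y))\<^sup>2 + \<eta> * rz \<le> 1/2 * (norm (q - y))\<^sup>2 + \<eta> * rq"
      using rz rq by simp
    moreover have "\<eta> * rq \<le> \<eta> * ((1 - t) * rz + t * rw)" using rq(2) eta by simp
    ultimately show ?thesis unfolding \<phi>_def q_def by (simp add: algebra_simps)
  qed
  ultimately have "0 \<le> (z - y) \<bullet> (w - z) + \<eta> * (rw - rz)" by (rule L0)
  then show ?thesis by (simp add: inner_diff_left algebra_simps)
qed

lemma xs_vi:
  fixes r :: "'a::euclidean_space \<Rightarrow> ereal"
  assumes pcc: "proper_closed_convex r"
    and dF: "(F0 has_derivative (\<lambda>h. g \<bullet> h)) (at xs)"
    and xm: "\<And>y. ereal (F0 xs) + r xs \<le> ereal (F0 y) + r y"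
    and rx: "r xs = ereal rx" and rw: "r w = ereal rw"
  shows "0 \<le> g \<bullet> (w - xs) + (rw - rx)"
proof -
  define \<phi> where "\<phi> t = F0 (xs + t *\<^sub>R (w - xs)) + t * (rw - rx)" for t
  have A: "((\<lambda>t. F0 (xs + t *\<^sub>R (w - xs))) has_real_derivative (g \<bullet> (w - xs))) (at 0)"
    by (rule path_deriv[OF dF])
  have B: "((\<lambda>t. t * (rw - rx)) has_real_derivative (rw - rx)) (at 0)"
    by (auto intro!: derivative_eq_intros)
  have "(\<phi> has_real_derivative (g \<bullet> (w - xs) + (rw - rx))) (at 0)"
    unfolding \<phi>_def[abs_def] by (rule DERIV_add[OF A B])
  moreover have "\<phi> 0 \<le> \<phi> t" if t: "0 < t" "t \<le> 1" for t
  proof -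
    define q where "q = xs + t *\<^sub>R (w - xs)"
    have "r q \<le> ereal ((1 - t) * rx + t * rw)" unfolding q_def using r_conv[OF pcc rx rw] t by simp
    then obtain rq where rq: "r q = ereal rq" "rq \<le> (1 - t) * rx + t * rw" using real_of_r[OF pcc] by blast
    have "ereal (F0 xs) + r xs \<le> ereal (F0 q) + r q" by (rule xm)
    then have "F0 xs + rx \<le> F0 q + rq" using rx rq by simp
    then show ?thesis unfolding \<phi>_def q_def using rq(2) by (simp add: algebra_simps)
  qed
  ultimately show ?thesis by (rule L0)
qed



theorem lemma2:
  fixes m K :: nat
    and f :: "nat \<Rightarrow> 'a::euclidean_space \<Rightarrow> real"
    and gradf :: "nat \<Rightarrow> 'a \<Rightarrow> 'a"
    and Li :: "nat \<Rightarrow> real"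
    and \<mu> \<eta> :: real
    and r :: "'a \<Rightarrow> ereal"
    and xs :: 'a
    and x :: "nat \<Rightarrow> 'a"
    and \<tau> :: "nat \<Rightarrow> nat \<Rightarrow> nat"
  assumes m_pos: "m \<ge> 1"
    and grad: "\<And>i y. i < m \<Longrightarrow> (f i has_derivative (\<lambda>h. gradf i y \<bullet> h)) (at y)"
    and Li_nonneg: "\<And>i. i < m \<Longrightarrow> Li i \<ge> 0"
    and lips: "\<And>i y z. i < m \<Longrightarrow> norm (gradf i y - gradf i z) \<le> Li i * norm (y - z)"
    and mu_pos: "\<mu> > 0"
    and strong: "convex_on UNIV (\<lambda>y. (1 / real m) * (\<Sum>i<m. f i y) - \<mu> / 2 * (norm y)\<^sup>2)"
    and r_pcc: "proper_closed_convex r"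
    and xs_min: "\<And>y. ereal ((1 / real m) * (\<Sum>i<m. f i xs)) + r xs
                      \<le> ereal ((1 / real m) * (\<Sum>i<m. f i y)) + r y"
    and eta_pos: "\<eta> > 0"
    and eta_le: "\<eta> * ((1 / real m) * (\<Sum>i<m. Li i)) \<le> 1"
    and tau_lo: "\<And>i k. i < m \<Longrightarrow> k - K \<le> \<tau> i k"
    and tau_hi: "\<And>i k. i < m \<Longrightarrow> \<tau> i k \<le> k"
    and step: "\<And>k. is_prox r \<eta>
                 (x k - \<eta> *\<^sub>R ((1 / real m) *\<^sub>R (\<Sum>i<m. gradf i (x (\<tau> i k))))) (x (Suc k))"
  shows "\<And>k. norm (x k - xs) \<le>
      2 / \<mu> * norm ((1 / \<eta>) *\<^sub>R (x (Suc k) - x k))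
      + 2 * \<eta> * (((1 / real m) * (\<Sum>i<m. Li i)) / \<mu>)
          * (\<Sum>j\<in>{k - K..<k}. norm ((1 / \<eta>) *\<^sub>R (x (Suc j) - x j)))"
  proof -
  define F0 where "F0 y = (1/real m) * (\<Sum>i<m. f i y)" for y
  define G where "G y = (1/real m) *\<^sub>R (\<Sum>i<m. gradf i y)" for y
  define L where "L = (1/real m) * (\<Sum>i<m. Li i)"
  have mpos: "real m > 0" using m_pos by simp
  have dF: "(F0 has_derivative (\<lambda>h. G y \<bullet> h)) (at y)" for y
  proof -
    have "((\<lambda>y. \<Sum>i<m. f i y) has_derivative (\<lambda>h. \<Sum>i<m. gradf i y \<bullet> h)) (at y)"
      by (rule has_derivative_sum) (use grad in auto)
    then have "((\<lambda>y. (1/real m) * (\<Sum>i<m. f i y)) has_derivative (\<lambda>h. (1/real m) * (\<Sum>i<m. gradf i y \<bullet> h))) (at y)"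
      by (rule has_derivative_mult_right)
    moreover have "(\<lambda>h. (1/real m) * (\<Sum>i<m. gradf i y \<bullet> h)) = (\<lambda>h. G y \<bullet> h)"
      by (auto simp: G_def fun_eq_iff inner_sum_left)
    ultimately show ?thesis unfolding F0_def[abs_def] by simp
  qed
  have lipG: "norm ((1/real m) *\<^sub>R (\<Sum>i<m. gradf i (p i) - gradf i (q i)))
      \<le> (1/real m) * (\<Sum>i<m. Li i * norm (p i - q i))" for p q
  proof -
    have "norm (\<Sum>i<m. gradf i (p i) - gradf i (q i)) \<le> (\<Sum>i<m. norm (gradf i (p i) - gradf i (q i)))"
      by (rule norm_sum)
    also have "\<dots> \<le> (\<Sum>i<m. Li i * norm (p i - q i))" by (rule sum_mono) (use lips in auto)
    finally have "(1/real m) * norm (\<Sum>i<m. gradf i (p i) - gradf i (q i)) \<le> (1/real m) * (\<Sum>i<m. Li i * norm (p i - q i))"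
      using mpos by (intro mult_left_mono) auto
    then show ?thesis using mpos by simp
  qed
  have GL: "norm (G a - G b) \<le> L * norm (a - b)" for a b
  proof -
    have "G a - G b = (1/real m) *\<^sub>R (\<Sum>i<m. gradf i a - gradf i b)"
      by (simp add: G_def sum_subtractf scaleR_diff_right)
    moreover have "(1/real m) * (\<Sum>i<m. Li i * norm (a - b)) = L * norm (a - b)"
      by (simp add: L_def sum_distrib_right)
    ultimately show ?thesis using lipG[of "\<lambda>_. a" "\<lambda>_. b"] by simp
  qed
  define h where "h y = F0 y - \<mu>/2 * (norm y)^2" for y
  have hc: "convex_on UNIV h" unfolding h_def[abs_def] F0_def using strong .
  have dh: "(h has_derivative (\<lambda>u. (G y - \<mu> *\<^sub>R y) \<bullet> u)) (at y)" for y
  proof -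
    have n2: "((\<lambda>u. (norm u)^2) has_derivative (\<lambda>v. (2 *\<^sub>R y) \<bullet> v)) (at y)" using sqd[of 0 y] by simp
    have "((\<lambda>u. F0 u - \<mu>/2 * (norm u)^2) has_derivative (\<lambda>v. G y \<bullet> v - \<mu>/2 * ((2 *\<^sub>R y) \<bullet> v))) (at y)"
      by (intro has_derivative_diff has_derivative_mult_right dF n2)
    moreover have "(\<lambda>v. G y \<bullet> v - \<mu>/2 * ((2 *\<^sub>R y) \<bullet> v)) = (\<lambda>v. (G y - \<mu> *\<^sub>R y) \<bullet> v)"
      by (auto simp: fun_eq_iff inner_diff_left)
    ultimately show ?thesis unfolding h_def[abs_def] by simp
  qed
  have mono: "\<mu> * (norm (a - b))^2 \<le> (G a - G b) \<bullet> (a - b)" for a b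
  proof -
    have t1: "h a + (G a - \<mu> *\<^sub>R a) \<bullet> (b - a) \<le> h b" by (rule tangent[OF hc dh])
    have t2: "h b + (G b - \<mu> *\<^sub>R b) \<bullet> (a - b) \<le> h a" by (rule tangent[OF hc dh])
    have id: "(G a - \<mu> *\<^sub>R a) \<bullet> (b - a) + (G b - \<mu> *\<^sub>R b) \<bullet> (a - b)
        = \<mu> * ((a - b) \<bullet> (a - b)) - (G a - G b) \<bullet> (a - b)"
      by (simp add: inner_diff_left inner_diff_right inner_commute algebra_simps)
    show ?thesis using t1 t2 id by (simp add: power2_norm_eq_inner)
  qed
  have muL: "\<mu> \<le> L"
  proof -
    obtain e :: 'a where e: "e \<in> Basis" using nonempty_Basis by blast
    have ne: "norm e = 1" using e by simp
    have "\<mu> * (norm (e - 0))^2 \<le> (G e - G 0) \<bullet> (e - 0)" by (rule mono)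
    also have "\<dots> \<le> norm (G e - G 0) * norm (e - 0)" by (rule norm_cauchy_schwarz)
    also have "\<dots> \<le> L * norm (e - 0) * norm (e - 0)" using GL[of e 0] by (simp add: ne)
    finally show ?thesis using ne by simp
  qed
  have etaL: "\<eta> * L \<le> 1" using eta_le by (simp add: L_def)
  have me: "\<mu> * \<eta> \<le> 1"
  proof -
    have "\<mu> * \<eta> \<le> L * \<eta>" using muL eta_pos by (intro mult_right_mono) auto
    then show ?thesis using etaL by (simp add: mult.commute)
  qed
  have L0': "L \<ge> 0" using muL mu_pos by simp
  obtain p where rp: "r p \<noteq> \<infinity>" using r_pcc unfolding proper_closed_convex_def by blast
  have rpm: "r p \<noteq> -\<infinity>" using r_pcc unfolding proper_closed_convex_def by blast
  obtain rpv where rpv: "r p = ereal rpv" using rp rpm by (cases "r p") auto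
  have xm: "ereal (F0 xs) + r xs \<le> ereal (F0 y) + r y" for y using xs_min[of y] by (simp add: F0_def)
  obtain rx where rx: "r xs = ereal rx"
  proof -
    have "ereal (F0 xs) + r xs \<le> ereal (F0 p) + ereal rpv" using xm[of p] rpv by simp
    then have "r xs \<noteq> \<infinity>" by auto
    moreover have "r xs \<noteq> -\<infinity>" using r_pcc unfolding proper_closed_convex_def by blast
    ultimately show ?thesis using that by (cases "r xs") auto
  qed
  show "\<And>k. norm (x k - xs) \<le>
      2 / \<mu> * norm ((1 / \<eta>) *\<^sub>R (x (Suc k) - x k))
      + 2 * \<eta> * (((1 / real m) * (\<Sum>i<m. Li i)) / \<mu>)
          * (\<Sum>j\<in>{k - K..<k}. norm ((1 / \<eta>) *\<^sub>R (x (Suc j) - x j)))"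
  proof -
    fix k
    define z where "z = x (Suc k)"
    define g where "g = (1 / real m) *\<^sub>R (\<Sum>i<m. gradf i (x (\<tau> i k)))"
    define y where "y = x k - \<eta> *\<^sub>R g"
    have stepk: "is_prox r \<eta> y z" using step[of k] by (simp add: y_def z_def g_def)
    obtain rzv where rzv: "r z = ereal rzv"
    proof -
      have "ereal (1/2 * (norm (z - y))\<^sup>2) + ereal \<eta> * r z \<le> ereal (1/2 * (norm (p - y))\<^sup>2) + ereal \<eta> * r p"
        using stepk unfolding is_prox_def by blast
      then have "r z \<noteq> \<infinity>" using eta_pos rpv by auto
      moreover have "r z \<noteq> -\<infinity>" using r_pcc unfolding proper_closed_convex_def by blast
      ultimately show ?thesis using that by (cases "r z") auto
    qed
    have Pp: "(y - z) \<bullet> (xs - z) \<le> \<eta> * (rx - rzv)" by (rule prox_vi[OF r_pcc stepk eta_pos rzv rx])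
    have Px: "0 \<le> G xs \<bullet> (z - xs) + (rzv - rx)" by (rule xs_vi[OF r_pcc dF xm rx rzv])
    define dd where "dd = (1/\<eta>) *\<^sub>R (z - x k)"
    define e where "e = x k - xs"
    have zeq: "z = x k + \<eta> *\<^sub>R dd" using eta_pos by (simp add: dd_def)
    have yz: "y - z = - \<eta> *\<^sub>R (dd + g)" by (simp add: y_def zeq algebra_simps)
    have "\<eta> * ((dd + g) \<bullet> (z - xs)) \<le> \<eta> * (rx - rzv)"
      using Pp unfolding yz by (simp add: inner_diff_right algebra_simps)
    then have Pp2: "(dd + g) \<bullet> (z - xs) \<le> rx - rzv" using eta_pos by simp
    have P1: "0 \<le> (G xs - g - dd) \<bullet> (z - xs)"
      using Pp2 Px by (simp add: inner_diff_left inner_add_left algebra_simps)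
    have P2: "\<mu> * (norm e)^2 \<le> (G (x k) - G xs) \<bullet> e" unfolding e_def by (rule mono)
    define A where "A = G (x k) - g"
    define B where "B = G xs - G (x k)"
    have zx: "z - xs = e + \<eta> *\<^sub>R dd" by (simp add: zeq e_def)
    have ident: "(G (x k) - G xs) \<bullet> e + (G xs - g - dd) \<bullet> (z - xs)
       = A \<bullet> e - dd \<bullet> e + \<eta> * (A \<bullet> dd) + \<eta> * (B \<bullet> dd) - \<eta> * (dd \<bullet> dd)"
      unfolding zx A_def B_def by (simp add: inner_diff_left inner_diff_right inner_add_right algebra_simps)
    define E where "E = norm e"
    define n where "n = norm dd"
    define D where "D = norm A"
    have b1: "A \<bullet> e \<le> D * E" unfolding D_def E_def by (rule norm_cauchy_schwarz)
    have b2: "- (dd \<bullet> e) \<le> n * E" unfolding n_def E_def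
      using norm_cauchy_schwarz[of "- dd" e] by simp
    have b3: "A \<bullet> dd \<le> D * n" unfolding D_def n_def by (rule norm_cauchy_schwarz)
    have "B \<bullet> dd \<le> norm B * n" unfolding n_def by (rule norm_cauchy_schwarz)
    also have "\<dots> \<le> (L * E) * n" unfolding E_def n_def B_def e_def
      using GL[of xs "x k"] by (intro mult_right_mono) (auto simp: norm_minus_commute)
    finally have b4: "B \<bullet> dd \<le> L * E * n" .
    have "\<eta> * (B \<bullet> dd) \<le> \<eta> * (L * E * n)" using b4 eta_pos by simp
    also have "\<dots> = (\<eta> * L) * (E * n)" by simp
    also have "\<dots> \<le> 1 * (E * n)" using etaL unfolding E_def n_def by (intro mult_right_mono) auto
    finally have b4': "\<eta> * (B \<bullet> dd) \<le> E * n" by simp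
    have b3': "\<eta> * (A \<bullet> dd) \<le> \<eta> * (D * n)" using b3 eta_pos by simp
    have b5: "dd \<bullet> dd = n^2" unfolding n_def by (simp add: power2_norm_eq_inner)
    have mainineq: "\<mu> * E^2 \<le> (D + 2*n) * E + \<eta> * D * n - \<eta> * n^2"
      using P1 P2 ident b1 b2 b3' b4' b5 unfolding E_def[symmetric]
      by (simp add: algebra_simps)
    have E_le: "E \<le> (2*n + 2*D) / \<mu>"
      by (rule final_arith[OF mu_pos eta_pos me _ _ _ mainineq]) (auto simp: E_def n_def D_def)
    define S where "S = (\<Sum>j\<in>{k - K..<k}. norm (x (Suc j) - x j))"
    have S0: "S \<ge> 0" unfolding S_def by (intro sum_nonneg) auto
    have DS: "D \<le> L * S"
    proof -
      have "A = (1/real m) *\<^sub>R (\<Sum>i<m. gradf i (x k) - gradf i (x (\<tau> i k)))"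
        by (simp add: A_def G_def g_def sum_subtractf scaleR_diff_right)
      then have "D \<le> (1/real m) * (\<Sum>i<m. Li i * norm (x k - x (\<tau> i k)))"
        unfolding D_def using lipG[of "\<lambda>_. x k" "\<lambda>i. x (\<tau> i k)"] by simp
      also have "\<dots> \<le> (1/real m) * (\<Sum>i<m. Li i * S)"
      proof -
        have "norm (x k - x (\<tau> i k)) \<le> S" if i: "i < m" for i
        proof -
          have "norm (x k - x (\<tau> i k)) \<le> (\<Sum>j\<in>{\<tau> i k..<k}. norm (x (Suc j) - x j))"
            by (rule tele) (use tau_hi i in auto)
          also have "\<dots> \<le> S" unfolding S_def
            by (rule sum_mono2) (use tau_lo[OF i, of k] in auto)
          finally show ?thesis .
        qed
        then have "(\<Sum>i<m. Li i * norm (x k - x (\<tau> i k))) \<le> (\<Sum>i<m. Li i * S)"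
          by (intro sum_mono mult_left_mono) (auto simp: Li_nonneg)
        then show ?thesis using mpos by (intro mult_left_mono) auto
      qed
      also have "\<dots> = L * S" by (simp add: L_def sum_distrib_right)
      finally show ?thesis .
    qed
    have sumeq: "(\<Sum>j\<in>{k - K..<k}. norm ((1 / \<eta>) *\<^sub>R (x (Suc j) - x j))) = S / \<eta>"
      unfolding S_def using eta_pos by (simp add: sum_divide_distrib)
    have neq: "norm ((1 / \<eta>) *\<^sub>R (x (Suc k) - x k)) = n" by (simp add: n_def dd_def z_def)
    have "E \<le> (2*n + 2*D) / \<mu>" by (rule E_le)
    also have "\<dots> \<le> (2*n + 2*(L*S)) / \<mu>" using DS mu_pos by (intro divide_right_mono) auto
    also have "\<dots> = 2 / \<mu> * n + 2 * \<eta> * (L / \<mu>) * (S / \<eta>)" using eta_pos mu_pos by (simp add: field_simps)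
    finally show "norm (x k - xs) \<le>
      2 / \<mu> * norm ((1 / \<eta>) *\<^sub>R (x (Suc k) - x k))
      + 2 * \<eta> * (((1 / real m) * (\<Sum>i<m. Li i)) / \<mu>)
          * (\<Sum>j\<in>{k - K..<k}. norm ((1 / \<eta>) *\<^sub>R (x (Suc j) - x j)))"
      unfolding sumeq neq L_def[symmetric] E_def e_def .
  qed
qed

end
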